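(* Let $X\in\mathcal{Y}$ and $T\in L(X)$. Suppose there exists $M\in L(X)$ with $[T,[T,M]]=0$ such that for every cyclic vector $u$ of $T$ and every $v\in X$ there exist $B,C\in\mathcal{C}(T)$ with $C[T,M]\neq 0$ and $Cv=Bu$. Then $T$ is not weakly supercyclic.
   Context: Scalars are $\mathbb{K}\in\{\mathbb{R},\mathbb{C}\}$. $L(X)$ denotes bounded linear operators on the Banach space $X$; $[T,S]=TS-ST$; $\mathcal{C}(T)=\{S\in L(X):[T,S]=0\}$. A vector $u$ is cyclic for $T$ if the span of $\{T^nu:n\in\mathbb{Z}_+\}$ is dense. $T$ is weakly supercyclic if for some $x$ the set $\{zT^nx:z\in\mathbb{K},n\in\mathbb{Z}_+\}$ is weakly dense in $X$. $\mathcal{Y}$ is the class of Banach spaces $X$ such that for every sequence $(x_n)_{n\in\mathbb{Z}_+}$ in $X$ with $n=O(\|x_n\|)$ as $n\to\infty$, the set $\{x_n:n\in\mathbb{Z}_+\}$ is weakly closed. *)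

theory Defs
  imports "HOL-Analysis.Analysis" "HOL-Library.Landau_Symbols"
begin

text \<open>Scalar multiplication sc over a scalar field 'k making a real Banach space a
  K-Banach space (used with K = complex; for K = real one uses scaleR).\<close>
definition normed_module :: "('k::real_normed_field \<Rightarrow> 'a::real_normed_vector \<Rightarrow> 'a) \<Rightarrow> bool" where
  "normed_module sc \<longleftrightarrow>
     (\<forall>r x. sc (of_real r) x = scaleR r x) \<and>
     (\<forall>a b x. sc a (sc b x) = sc (a * b) x) \<and>
     (\<forall>a x y. sc a (x + y) = sc a x + sc a y) \<and>
     (\<forall>a b x. sc (a + b) x = sc a x + sc b x) \<and>
     (\<forall>x. sc 1 x = x) \<and>
     (\<forall>a x. norm (sc a x) = norm a * norm x)"

definition linop :: "('k \<Rightarrow> 'a::real_normed_vector \<Rightarrow> 'a) \<Rightarrow> ('a \<Rightarrow> 'a) \<Rightarrow> bool" where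
  "linop sc T \<longleftrightarrow> bounded_linear T \<and> (\<forall>c x. T (sc c x) = sc c (T x))"

definition comm :: "('a::ab_group_add \<Rightarrow> 'a) \<Rightarrow> ('a \<Rightarrow> 'a) \<Rightarrow> 'a \<Rightarrow> 'a" where
  "comm T S = (\<lambda>x. T (S x) - S (T x))"

definition centralizer :: "('k \<Rightarrow> 'a::real_normed_vector \<Rightarrow> 'a) \<Rightarrow> ('a \<Rightarrow> 'a) \<Rightarrow> ('a \<Rightarrow> 'a) set" where
  "centralizer sc T = {S. linop sc S \<and> comm T S = (\<lambda>x. 0)}"

definition kspan :: "('k \<Rightarrow> 'a::real_normed_vector \<Rightarrow> 'a) \<Rightarrow> 'a set \<Rightarrow> 'a set" where
  "kspan sc A = {\<Sum>i<n. sc (c i) (v i) | (n::nat) c v. \<forall>i<n. v i \<in> A}"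

definition cyclic_vector :: "('k \<Rightarrow> 'a::real_normed_vector \<Rightarrow> 'a) \<Rightarrow> ('a \<Rightarrow> 'a) \<Rightarrow> 'a \<Rightarrow> bool" where
  "cyclic_vector sc T u \<longleftrightarrow> closure (kspan sc (range (\<lambda>n. (T ^^ n) u))) = UNIV"

text \<open>Closure in the weak topology sigma(X, X*), via basic weak neighbourhoods.
  Real-valued continuous real-linear functionals generate the weak topology both
  for real and for complex spaces.\<close>
definition weak_closure :: "'a::real_normed_vector set \<Rightarrow> 'a set" where
  "weak_closure S = {x. \<forall>F::('a \<Rightarrow> real) set. finite F \<and> (\<forall>f\<in>F. bounded_linear f) \<longrightarrow>
      (\<forall>e>0. \<exists>s\<in>S. \<forall>f\<in>F. \<bar>f s - f x\<bar> < e)}"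

definition weakly_closed :: "'a::real_normed_vector set \<Rightarrow> bool" where
  "weakly_closed S \<longleftrightarrow> weak_closure S \<subseteq> S"

definition weakly_supercyclic :: "('k \<Rightarrow> 'a::real_normed_vector \<Rightarrow> 'a) \<Rightarrow> ('a \<Rightarrow> 'a) \<Rightarrow> bool" where
  "weakly_supercyclic sc T \<longleftrightarrow>
     (\<exists>x. weak_closure {sc z ((T ^^ n) x) | z n. True} = UNIV)"

definition in_class_Y :: "'a::real_normed_vector itself \<Rightarrow> bool" where
  "in_class_Y _ \<longleftrightarrow> (\<forall>xs :: nat \<Rightarrow> 'a.
      (\<lambda>n. real n) \<in> O(\<lambda>n. norm (xs n)) \<longrightarrow> weakly_closed (range xs))"

end

theory Submission
  imports Defs
begin


definition good :: "real \<Rightarrow> ('a::real_normed_vector \<times> real) set \<Rightarrow> bool" where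
"good K G \<longleftrightarrow> (\<forall>a r r'. (a,r)\<in>G \<longrightarrow> (a,r')\<in>G \<longrightarrow> r = r') \<and>
   (\<forall>a r b q. (a,r)\<in>G \<longrightarrow> (b,q)\<in>G \<longrightarrow> (a+b, r+q)\<in>G) \<and>
   (\<forall>a r c. (a,r)\<in>G \<longrightarrow> (c *\<^sub>R a, c*r)\<in>G) \<and>
   (\<forall>a r. (a,r)\<in>G \<longrightarrow> r \<le> K * norm a)"

lemma good_chain_union:
  assumes C: "C \<in> chains {G. good K G \<and> G0 \<subseteq> G}" and ne: "C \<noteq> {}"
  shows "good K (\<Union>C) \<and> G0 \<subseteq> \<Union>C"
proof -
  have sub: "\<And>G. G \<in> C \<Longrightarrow> good K G \<and> G0 \<subseteq> G" using chainsD2[OF C] by blast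
  have two: "\<And>p q. p \<in> \<Union>C \<Longrightarrow> q \<in> \<Union>C \<Longrightarrow> \<exists>G\<in>C. p \<in> G \<and> q \<in> G"
    using chainsD[OF C] by blast
  show ?thesis
  proof (intro conjI)
    show "good K (\<Union>C)" unfolding good_def
    proof (intro conjI allI impI)
      fix a r r' assume "(a,r)\<in>\<Union>C" "(a,r')\<in>\<Union>C"
      then obtain G where "G\<in>C" "(a,r)\<in>G" "(a,r')\<in>G" using two by blast
      then show "r = r'" using sub unfolding good_def by blast
    next
      fix a r b q assume "(a,r)\<in>\<Union>C" "(b,q)\<in>\<Union>C"
      then obtain G where "G\<in>C" "(a,r)\<in>G" "(b,q)\<in>G" using two by blast
      then show "(a+b, r+q)\<in>\<Union>C" using sub unfolding good_def by blast
    next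
      fix a r c assume "(a,r)\<in>\<Union>C"
      then obtain G where "G\<in>C" "(a,r)\<in>G" by blast
      then show "(c *\<^sub>R a, c*r)\<in>\<Union>C" using sub unfolding good_def by blast
    next
      fix a r assume "(a,r)\<in>\<Union>C"
      then obtain G where "G\<in>C" "(a,r)\<in>G" by blast
      then show "r \<le> K * norm a" using sub unfolding good_def by blast
    qed
    show "G0 \<subseteq> \<Union>C" using ne sub by blast
  qed
qed

lemma good_extend:
  assumes g: "good K M" and K: "K \<ge> 0" and ne: "M \<noteq> {}" and x0: "\<And>r. (x0, r) \<notin> M"
  shows "\<exists>M'. good K M' \<and> M \<subseteq> M' \<and> M' \<noteq> M"
proof -
  have fnc: "\<And>a r r'. (a,r)\<in>M \<Longrightarrow> (a,r')\<in>M \<Longrightarrow> r = r'"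
   and add: "\<And>a r b q. (a,r)\<in>M \<Longrightarrow> (b,q)\<in>M \<Longrightarrow> (a+b, r+q)\<in>M"
   and scl: "\<And>a r c. (a,r)\<in>M \<Longrightarrow> (c *\<^sub>R a, c*r)\<in>M"
   and dom: "\<And>a r. (a,r)\<in>M \<Longrightarrow> r \<le> K * norm a" using g unfolding good_def by blast+
  obtain a0 r0 where "(a0,r0)\<in>M" using ne by auto
  from scl[OF this, of 0] have zero: "(0,0)\<in>M" by simp
  define L where "L = {r - K * norm (a - x0) | a r. (a,r)\<in>M}"
  have key: "r - K * norm (a - x0) \<le> K * norm (b + x0) - q" if "(a,r)\<in>M" "(b,q)\<in>M" for a r b q
  proof -
    have "r + q \<le> K * norm (a + b)" using dom[OF add[OF that]] .
    also have "norm (a + b) \<le> norm (a - x0) + norm (b + x0)"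
      using norm_triangle_ineq[of "a - x0" "b + x0"] by simp
    hence "K * norm (a + b) \<le> K * (norm (a - x0) + norm (b + x0))" using K by (simp add: mult_left_mono)
    finally show ?thesis by (simp add: algebra_simps)
  qed
  define c where "c = Sup L"
  have Lne: "L \<noteq> {}" using zero unfolding L_def by blast
  have bdd: "bdd_above L" unfolding L_def bdd_above_def using key zero by blast
  have cup: "r - K * norm (a - x0) \<le> c" if "(a,r)\<in>M" for a r
    unfolding c_def by (rule cSup_upper[OF _ bdd]) (use that L_def in blast)
  have clow: "c \<le> K * norm (b + x0) - q" if "(b,q)\<in>M" for b q
    unfolding c_def by (rule cSup_least[OF Lne]) (use that key L_def in blast)
  define M' where "M' = {(a + t *\<^sub>R x0, r + t * c) | a r t. (a,r)\<in>M}"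
  have "good K M'" unfolding good_def
  proof (intro conjI allI impI)
    fix z s s' assume "(z,s)\<in>M'" "(z,s')\<in>M'"
    then obtain a r t a' r' t' where 1: "z = a + t *\<^sub>R x0" "s = r + t * c" "(a,r)\<in>M"
       and 2: "z = a' + t' *\<^sub>R x0" "s' = r' + t' * c" "(a',r')\<in>M" unfolding M'_def by blast
    have "t = t'"
    proof (rule ccontr)
      assume ne: "t \<noteq> t'"
      have "(a' + (-1) *\<^sub>R a, r' + (-1) * r) \<in> M" using add[OF 2(3) scl[OF 1(3)]] .
      from scl[OF this, of "1/(t - t')"]
      have "((1/(t - t')) *\<^sub>R (a' + (-1) *\<^sub>R a), (1/(t-t')) * (r' + (-1) * r)) \<in> M" .
      moreover have "(1/(t - t')) *\<^sub>R (a' + (-1) *\<^sub>R a) = x0"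
      proof -
        have "a' - a = (t - t') *\<^sub>R x0" using 1(1) 2(1) by (simp add: algebra_simps)
        hence "(1/(t - t')) *\<^sub>R (a' + (-1) *\<^sub>R a) = (1/(t - t')) *\<^sub>R ((t - t') *\<^sub>R x0)" by simp
        thus ?thesis using ne by simp
      qed
      ultimately show False using x0 by simp
    qed
    then have "a = a'" using 1(1) 2(1) by simp
    then have "r = r'" using fnc 1(3) 2(3) by blast
    then show "s = s'" using 1 2 \<open>t = t'\<close> by simp
  next
    fix z s w q assume "(z,s)\<in>M'" "(w,q)\<in>M'"
    then obtain a r t a' r' t' where 1: "z = a + t *\<^sub>R x0" "s = r + t * c" "(a,r)\<in>M"
       and 2: "w = a' + t' *\<^sub>R x0" "q = r' + t' * c" "(a',r')\<in>M" unfolding M'_def by blast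
    have "(a + a', r + r') \<in> M" using add 1(3) 2(3) by blast
    moreover have "z + w = (a + a') + (t + t') *\<^sub>R x0" "s + q = (r + r') + (t + t') * c"
      using 1 2 by (simp_all add: algebra_simps)
    ultimately show "(z + w, s + q) \<in> M'" unfolding M'_def by blast
  next
    fix z s d assume "(z,s)\<in>M'"
    then obtain a r t where 1: "z = a + t *\<^sub>R x0" "s = r + t * c" "(a,r)\<in>M" unfolding M'_def by blast
    have "(d *\<^sub>R a, d * r) \<in> M" using scl 1(3) by blast
    moreover have "d *\<^sub>R z = d *\<^sub>R a + (d * t) *\<^sub>R x0" "d * s = d * r + (d * t) * c"
      using 1 by (simp_all add: algebra_simps)
    ultimately show "(d *\<^sub>R z, d * s) \<in> M'" unfolding M'_def by blast
  next
    fix z s assume "(z,s)\<in>M'"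
    then obtain a r t where 1: "z = a + t *\<^sub>R x0" "s = r + t * c" "(a,r)\<in>M" unfolding M'_def by blast
    consider "t = 0" | "t > 0" | "t < 0" by linarith
    then show "s \<le> K * norm z"
    proof cases
      case 1 thus ?thesis using \<open>z = _\<close> \<open>s = _\<close> dom[OF \<open>(a,r)\<in>M\<close>] by simp
    next
      case 2
      have "((1/t) *\<^sub>R a, (1/t) * r) \<in> M" using scl 1(3) by blast
      from clow[OF this] have "c \<le> K * norm ((1/t) *\<^sub>R a + x0) - (1/t) * r" .
      hence "t * c \<le> t * (K * norm ((1/t) *\<^sub>R a + x0) - (1/t) * r)" using 2 by (simp add: mult_left_mono)
      also have "\<dots> = K * (t * norm ((1/t) *\<^sub>R a + x0)) - r" using 2 by (simp add: field_simps)
      also have "t * norm ((1/t) *\<^sub>R a + x0) = norm (t *\<^sub>R ((1/t) *\<^sub>R a + x0))" using 2 by simp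
      also have "t *\<^sub>R ((1/t) *\<^sub>R a + x0) = z" using 2 1(1) by (simp add: algebra_simps)
      finally show ?thesis using 1(2) by simp
    next
      case 3
      define u where "u = - t"
      have u: "u > 0" using 3 u_def by simp
      have "((1/u) *\<^sub>R a, (1/u) * r) \<in> M" using scl 1(3) by blast
      from cup[OF this] have "(1/u) * r - K * norm ((1/u) *\<^sub>R a - x0) \<le> c" .
      hence "u * ((1/u) * r - K * norm ((1/u) *\<^sub>R a - x0)) \<le> u * c" using u by (simp add: mult_left_mono)
      moreover have "u * ((1/u) * r - K * norm ((1/u) *\<^sub>R a - x0)) = r - K * (u * norm ((1/u) *\<^sub>R a - x0))"
        using u by (simp add: field_simps)
      moreover have "u * norm ((1/u) *\<^sub>R a - x0) = norm (u *\<^sub>R ((1/u) *\<^sub>R a - x0))" using u by simp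
      moreover have "u *\<^sub>R ((1/u) *\<^sub>R a - x0) = z" proof -
          have "u *\<^sub>R ((1/u) *\<^sub>R a - x0) = a - u *\<^sub>R x0" using u by (simp add: algebra_simps)
          thus ?thesis using 1(1) u_def by simp qed
      ultimately have "r - K * norm z \<le> u * c" by simp
      moreover have "s = r - u * c" using 1(2) u_def by simp
      ultimately show ?thesis by simp
    qed
  qed
  moreover have "M \<subseteq> M'"
  proof
    fix p assume "p \<in> M"
    then obtain a r where "p = (a,r)" "(a,r)\<in>M" by (cases p) auto
    moreover have "p = (a + 0 *\<^sub>R x0, r + 0 * c)" using \<open>p = (a,r)\<close> by simp
    ultimately show "p \<in> M'" unfolding M'_def by blast
  qed
  moreover have "(x0, c) \<in> M'" proof -
    have "(x0, c) = (0 + 1 *\<^sub>R x0, 0 + 1 * c)" by simp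
    thus ?thesis unfolding M'_def using zero by blast qed
  ultimately show ?thesis using x0 by blast
qed

lemma hb_graph:
  assumes g0: "good K G0" and ne: "G0 \<noteq> {}" and K: "K \<ge> 0"
  shows "\<exists>f. linear f \<and> (\<forall>z. f z \<le> K * norm z) \<and> (\<forall>a r. (a,r)\<in>G0 \<longrightarrow> f a = r)"
proof -
  define A where "A = {G. good K G \<and> G0 \<subseteq> G}"
  have "\<forall>C\<in>chains A. \<exists>U\<in>A. \<forall>X\<in>C. X \<subseteq> U"
  proof
    fix C assume C: "C \<in> chains A"
    show "\<exists>U\<in>A. \<forall>X\<in>C. X \<subseteq> U"
    proof (cases "C = {}")
      case True thus ?thesis using g0 unfolding A_def by blast
    next
      case False
      then have "\<Union>C \<in> A" using good_chain_union[of C K G0] C unfolding A_def by blast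
      thus ?thesis by blast
    qed
  qed
  from Zorn_Lemma2[OF this] obtain M where M: "M \<in> A" and max: "\<And>X. X\<in>A \<Longrightarrow> M \<subseteq> X \<Longrightarrow> X = M" by blast
  have gM: "good K M" and sub: "G0 \<subseteq> M" using M unfolding A_def by auto
  have fnc: "\<And>a r r'. (a,r)\<in>M \<Longrightarrow> (a,r')\<in>M \<Longrightarrow> r = r'"
   and add: "\<And>a r b q. (a,r)\<in>M \<Longrightarrow> (b,q)\<in>M \<Longrightarrow> (a+b, r+q)\<in>M"
   and scl: "\<And>a r c. (a,r)\<in>M \<Longrightarrow> (c *\<^sub>R a, c*r)\<in>M"
   and dom: "\<And>a r. (a,r)\<in>M \<Longrightarrow> r \<le> K * norm a" using gM unfolding good_def by blast+
  have tot: "\<exists>r. (z,r)\<in>M" for z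
  proof (rule ccontr)
    assume "\<nexists>r. (z, r) \<in> M"
    then obtain M' where "good K M'" "M \<subseteq> M'" "M' \<noteq> M"
      using good_extend[OF gM K] ne sub by blast
    moreover have "M' \<in> A" using \<open>good K M'\<close> \<open>M \<subseteq> M'\<close> sub unfolding A_def by auto
    ultimately show False using max by blast
  qed
  define f where "f z = (THE r. (z,r)\<in>M)" for z
  have fM: "(z, f z) \<in> M" for z
    unfolding f_def using tot[of z] fnc by (metis theI)
  have fval: "(z,r)\<in>M \<Longrightarrow> f z = r" for z r using fM fnc by blast
  have "linear f"
  proof (rule linearI)
    fix b1 b2 show "f (b1 + b2) = f b1 + f b2" using fval add fM by blast
  next
    fix r b show "f (r *\<^sub>R b) = r *\<^sub>R f b" using fval scl fM by (simp)
  qed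
  moreover have "\<forall>z. f z \<le> K * norm z" using dom fM by blast
  moreover have "\<forall>a r. (a,r)\<in>G0 \<longrightarrow> f a = r" using fval sub by blast
  ultimately show ?thesis by blast
qed




lemma sum_concat_nat: "(\<Sum>i<n+m. g i) = (\<Sum>i<n. g i) + (\<Sum>i<m. g (n+i))"
  for g :: "nat \<Rightarrow> 'b::comm_monoid_add"
  by (induction m) (simp_all add: add.assoc)

lemma hb_sep:
  fixes S :: "'a::real_normed_vector set"
  assumes S0: "0 \<in> S" and Sadd: "\<And>a b. a\<in>S \<Longrightarrow> b\<in>S \<Longrightarrow> a+b\<in>S"
    and Sscl: "\<And>a c. a\<in>S \<Longrightarrow> c *\<^sub>R a \<in> S" and x: "x \<notin> closure S"
  shows "\<exists>f::'a\<Rightarrow>real. bounded_linear f \<and> (\<forall>s\<in>S. f s = 0) \<and> f x = 1"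
proof -
  define d where "d = infdist x S"
  have Sne: "S \<noteq> {}" using S0 by blast
  have dpos: "d > 0" using x in_closure_iff_infdist_zero[OF Sne, of x] infdist_nonneg[of x S]
    unfolding d_def by linarith
  have xS: "x \<notin> S" using x closure_subset by blast
  define G0 where "G0 = {(s + t *\<^sub>R x, t) | s t. s \<in> S}"
  have "good (1/d) G0" unfolding good_def
  proof (intro conjI allI impI)
    fix a r r' assume "(a,r)\<in>G0" "(a,r')\<in>G0"
    then obtain s s' where 1: "a = s + r *\<^sub>R x" "s\<in>S" and 2: "a = s' + r' *\<^sub>R x" "s'\<in>S"
      unfolding G0_def by blast
    show "r = r'"
    proof (rule ccontr)
      assume ne: "r \<noteq> r'"
      have "s + (-1) *\<^sub>R s' \<in> S" using Sadd Sscl 1(2) 2(2) by blast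
      hence "(1/(r' - r)) *\<^sub>R (s + (-1) *\<^sub>R s') \<in> S" using Sscl by blast
      moreover have "s + (-1) *\<^sub>R s' = (r' - r) *\<^sub>R x" using 1(1) 2(1) by (simp add: algebra_simps)
      ultimately show False using ne xS by simp
    qed
  next
    fix a r b q assume "(a,r)\<in>G0" "(b,q)\<in>G0"
    then obtain s s' where 1: "a = s + r *\<^sub>R x" "s\<in>S" and 2: "b = s' + q *\<^sub>R x" "s'\<in>S"
      unfolding G0_def by blast
    have "a + b = (s + s') + (r + q) *\<^sub>R x" using 1 2 by (simp add: algebra_simps)
    thus "(a+b, r+q)\<in>G0" using Sadd 1(2) 2(2) unfolding G0_def by blast
  next
    fix a r c assume "(a,r)\<in>G0"
    then obtain s where 1: "a = s + r *\<^sub>R x" "s\<in>S" unfolding G0_def by blast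
    have "c *\<^sub>R a = c *\<^sub>R s + (c * r) *\<^sub>R x" using 1 by (simp add: algebra_simps)
    thus "(c *\<^sub>R a, c * r)\<in>G0" using Sscl 1(2) unfolding G0_def by blast
  next
    fix a r assume "(a,r)\<in>G0"
    then obtain s where 1: "a = s + r *\<^sub>R x" "s\<in>S" unfolding G0_def by blast
    show "r \<le> 1/d * norm a"
    proof (cases "r > 0")
      case False
      have "1/d * norm a \<ge> 0" using dpos by simp
      thus ?thesis using False by linarith
    next
      case True
      have m: "(- (1/r)) *\<^sub>R s \<in> S" using Sscl 1(2) by blast
      have "d \<le> dist x ((- (1/r)) *\<^sub>R s)" unfolding d_def by (rule infdist_le[OF m])
      also have "dist x ((- (1/r)) *\<^sub>R s) = norm ((1/r) *\<^sub>R a)"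
        using True 1(1) by (simp add: dist_norm algebra_simps)
      also have "\<dots> = norm a / r" using True by simp
      finally have "d * r \<le> norm a" using True by (simp add: field_simps)
      thus ?thesis using dpos by (simp add: field_simps)
    qed
  qed
  moreover have "G0 \<noteq> {}" using S0 unfolding G0_def by blast
  ultimately obtain f where f: "linear f" "\<And>z. f z \<le> 1/d * norm z" "\<And>a r. (a,r)\<in>G0 \<Longrightarrow> f a = r"
    using hb_graph[of "1/d" G0] dpos by auto
  have "bounded_linear f"
  proof (rule bounded_linear_intro[where K="1/d"])
    show "f (a + b) = f a + f b" for a b using f(1) by (simp add: linear_add)
    show "f (r *\<^sub>R a) = r *\<^sub>R f a" for r a using f(1) by (simp add: linear_scale)
    show "norm (f z) \<le> norm z * (1/d)" for z
    proof -
      have "f (-z) \<le> 1/d * norm (-z)" by (rule f(2))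
      hence "- f z \<le> 1/d * norm z" using f(1) by (simp add: linear_neg)
      thus ?thesis using f(2)[of z] by (simp add: abs_le_iff mult.commute)
    qed
  qed
  moreover have "\<forall>s\<in>S. f s = 0"
  proof
    fix s assume "s \<in> S"
    hence "(s + 0 *\<^sub>R x, 0) \<in> G0" unfolding G0_def by blast
    thus "f s = 0" using f(3) by simp
  qed
  moreover have "f x = 1"
  proof -
    have "(0 + 1 *\<^sub>R x, 1) \<in> G0" using S0 unfolding G0_def by blast
    thus ?thesis using f(3) by simp
  qed
  ultimately show ?thesis by blast
qed

lemma wclD:
  assumes "y \<in> weak_closure A" "finite (F :: ('a::real_normed_vector \<Rightarrow> real) set)" "\<forall>f\<in>F. bounded_linear f" "e > 0"
  shows "\<exists>s\<in>A. \<forall>f\<in>F. \<bar>f s - f y\<bar> < e"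
proof -
  have "\<forall>F::('a \<Rightarrow> real) set. finite F \<and> (\<forall>f\<in>F. bounded_linear f) \<longrightarrow>
      (\<forall>e>0. \<exists>s\<in>A. \<forall>f\<in>F. \<bar>f s - f y\<bar> < e)" using assms(1) unfolding weak_closure_def by simp
  hence "finite F \<and> (\<forall>f\<in>F. bounded_linear f) \<longrightarrow> (\<forall>e>0. \<exists>s\<in>A. \<forall>f\<in>F. \<bar>f s - f y\<bar> < e)"
    by (rule spec[where x=F])
  thus ?thesis using assms(2-4) by simp
qed

lemma wclI:
  assumes "\<And>(F :: ('a::real_normed_vector \<Rightarrow> real) set) e. finite F \<Longrightarrow> \<forall>f\<in>F. bounded_linear f \<Longrightarrow> e > 0 \<Longrightarrow> \<exists>s\<in>A. \<forall>f\<in>F. \<bar>f s - f y\<bar> < e"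
  shows "y \<in> weak_closure A"
  unfolding weak_closure_def mem_Collect_eq
proof (intro allI impI)
  fix F :: "('a \<Rightarrow> real) set" and e :: real
  assume a: "finite F \<and> (\<forall>f\<in>F. bounded_linear f)" and e: "e > 0"
  show "\<exists>s\<in>A. \<forall>f\<in>F. \<bar>f s - f y\<bar> < e" by (rule assms) (use a e in auto)
qed

lemma wcl_mono: "A \<subseteq> B \<Longrightarrow> weak_closure A \<subseteq> weak_closure B"
proof
  fix y assume AB: "A \<subseteq> B" and y: "y \<in> weak_closure A"
  show "y \<in> weak_closure B"
  proof (rule wclI)
    fix F :: "('a \<Rightarrow> real) set" and e :: real
    assume "finite F" "\<forall>f\<in>F. bounded_linear f" "e > 0"
    from wclD[OF y this] show "\<exists>s\<in>B. \<forall>f\<in>F. \<bar>f s - f y\<bar> < e" using AB by blast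
  qed
qed

lemma wcl_image:
  assumes L: "bounded_linear L" and y: "y \<in> weak_closure A"
  shows "L y \<in> weak_closure (L ` A)"
proof (rule wclI)
  fix F :: "('b \<Rightarrow> real) set" and e :: real
  assume F: "finite F" "\<forall>f\<in>F. bounded_linear f" and e: "e > 0"
  have "finite ((\<lambda>f. f \<circ> L) ` F)" using F by simp
  moreover have "\<forall>f\<in>(\<lambda>f. f \<circ> L) ` F. bounded_linear f"
    using F L by (auto intro: bounded_linear_compose simp: o_def)
  ultimately obtain s where "s \<in> A" "\<forall>f\<in>(\<lambda>f. f \<circ> L) ` F. \<bar>f s - f y\<bar> < e"
    using wclD[OF y _ _ e] by blast
  thus "\<exists>s\<in>L ` A. \<forall>f\<in>F. \<bar>f s - f (L y)\<bar> < e" by auto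
qed

lemma wcl_notD:
  assumes "y \<notin> weak_closure A"
  shows "\<exists>(F :: ('a::real_normed_vector \<Rightarrow> real) set) e. finite F \<and> (\<forall>f\<in>F. bounded_linear f) \<and> e > 0 \<and> (\<forall>s\<in>A. \<exists>f\<in>F. \<bar>f s - f y\<bar> \<ge> e)"
proof (rule ccontr)
  assume n: "\<not> ?thesis"
  have "y \<in> weak_closure A"
  proof (rule wclI)
    fix F :: "('a \<Rightarrow> real) set" and e :: real
    assume F: "finite F" "\<forall>f\<in>F. bounded_linear f" and e: "e > 0"
    show "\<exists>s\<in>A. \<forall>f\<in>F. \<bar>f s - f y\<bar> < e"
    proof (rule ccontr)
      assume "\<not> (\<exists>s\<in>A. \<forall>f\<in>F. \<bar>f s - f y\<bar> < e)"
      hence "\<forall>s\<in>A. \<exists>f\<in>F. \<bar>f s - f y\<bar> \<ge> e" by (auto simp: not_less)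
      hence "\<exists>(F' :: ('a \<Rightarrow> real) set) e'. finite F' \<and> (\<forall>f\<in>F'. bounded_linear f) \<and> e' > 0 \<and> (\<forall>s\<in>A. \<exists>f\<in>F'. \<bar>f s - f y\<bar> \<ge> e')"
        using F e by (intro exI[of _ F] exI[of _ e]) simp
      with n show False by contradiction
    qed
  qed
  thus False using assms by simp
qed

lemma wcl_Un: "weak_closure (A \<union> (B::'a::real_normed_vector set)) \<subseteq> weak_closure A \<union> weak_closure B"
proof
  fix y assume y: "y \<in> weak_closure (A \<union> B)"
  show "y \<in> weak_closure A \<union> weak_closure B"
  proof (rule ccontr)
    assume "y \<notin> weak_closure A \<union> weak_closure B"
    hence nA: "y \<notin> weak_closure A" and nB: "y \<notin> weak_closure B" by auto
    obtain F1 :: "('a \<Rightarrow> real) set" and e1 where 1: "finite F1" "\<forall>f\<in>F1. bounded_linear f" "e1 > 0"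
        "\<forall>s\<in>A. \<exists>f\<in>F1. \<bar>f s - f y\<bar> \<ge> e1" using wcl_notD[OF nA] by blast
    obtain F2 :: "('a \<Rightarrow> real) set" and e2 where 2: "finite F2" "\<forall>f\<in>F2. bounded_linear f" "e2 > 0"
        "\<forall>s\<in>B. \<exists>f\<in>F2. \<bar>f s - f y\<bar> \<ge> e2" using wcl_notD[OF nB] by blast
    have "finite (F1 \<union> F2)" "\<forall>f\<in>F1 \<union> F2. bounded_linear f" using 1 2 by auto
    moreover have "min e1 e2 > 0" using 1 2 by simp
    ultimately obtain s where s: "s \<in> A \<union> B" "\<forall>f\<in>F1 \<union> F2. \<bar>f s - f y\<bar> < min e1 e2"
      using wclD[OF y] by blast
    show False
    proof (cases "s \<in> A")
      case True then obtain f where f: "f\<in>F1" "\<bar>f s - f y\<bar> \<ge> e1" using 1 by blast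
      hence "\<bar>f s - f y\<bar> < min e1 e2" using s by blast
      thus False using f by linarith
    next
      case False then have "s \<in> B" using s by blast
      then obtain f where f: "f\<in>F2" "\<bar>f s - f y\<bar> \<ge> e2" using 2 by blast
      hence "\<bar>f s - f y\<bar> < min e1 e2" using s by blast
      thus False using f by linarith
    qed
  qed
qed

lemma wcl_subspace:
  fixes S :: "'a::real_normed_vector set"
  assumes S0: "0 \<in> S" and Sadd: "\<And>a b. a\<in>S \<Longrightarrow> b\<in>S \<Longrightarrow> a+b\<in>S"
    and Sscl: "\<And>a c. a\<in>S \<Longrightarrow> c *\<^sub>R a \<in> S"
  shows "weak_closure S \<subseteq> closure S"
proof
  fix x assume x: "x \<in> weak_closure S"
  show "x \<in> closure S"
  proof (rule ccontr)
    assume xn: "x \<notin> closure S"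
    have "\<exists>f::'a\<Rightarrow>real. bounded_linear f \<and> (\<forall>s\<in>S. f s = 0) \<and> f x = 1"
      by (rule hb_sep) (use S0 Sadd Sscl xn in auto)
    then obtain f :: "'a \<Rightarrow> real" where f: "bounded_linear f" "\<forall>s\<in>S. f s = 0" "f x = 1" by blast
    have "finite {f}" "\<forall>g\<in>{f}. bounded_linear g" using f by simp_all
    from wclD[OF x this zero_less_one] obtain s where "s\<in>S" "\<bar>f s - f x\<bar> < 1" by blast
    thus False using f by simp
  qed
qed

lemma point_sep:
  fixes x :: "'a::real_normed_vector"
  assumes "x \<noteq> 0" shows "\<exists>f::'a\<Rightarrow>real. bounded_linear f \<and> f x = 1"
  using hb_sep[of "{0::'a}" x] assms by auto




locale nmod =
  fixes sc :: "'k::real_normed_field \<Rightarrow> 'a::real_normed_vector \<Rightarrow> 'a"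
  assumes nm: "normed_module sc"
begin

lemma sc_of_real: "sc (of_real r) x = r *\<^sub>R x" using nm unfolding normed_module_def by blast
lemma sc_assoc: "sc a (sc b x) = sc (a*b) x" using nm unfolding normed_module_def by blast
lemma sc_add: "sc a (x + y) = sc a x + sc a y" using nm unfolding normed_module_def by blast
lemma sc_add_left: "sc (a + b) x = sc a x + sc b x" using nm unfolding normed_module_def by blast
lemma sc_one: "sc 1 x = x" using nm unfolding normed_module_def by blast
lemma sc_norm: "norm (sc a x) = norm a * norm x" using nm unfolding normed_module_def by blast
lemma sc_zero: "sc a 0 = 0"
  using sc_add[of a 0 0] by simp
lemma sc_minus: "sc a (- x) = - sc a x"
  using sc_add[of a x "-x"] sc_zero by (simp add: eq_neg_iff_add_eq_0 add.commute)
lemma sc_diff: "sc a (x - y) = sc a x - sc a y"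
  using sc_add[of a x "-y"] sc_minus[of a y] by simp
lemma sc_scaleR: "sc a (r *\<^sub>R x) = r *\<^sub>R sc a x"
proof -
  have "sc a (r *\<^sub>R x) = sc a (sc (of_real r) x)" by (simp add: sc_of_real)
  also have "\<dots> = sc (of_real r * a) x" by (simp add: sc_assoc mult.commute)
  also have "\<dots> = r *\<^sub>R sc a x" by (simp add: sc_assoc[symmetric] sc_of_real)
  finally show ?thesis .
qed
lemma sc_bl: "bounded_linear (sc a)"
  by (rule bounded_linear_intro[where K="norm a"]) (simp_all add: sc_add sc_scaleR sc_norm mult.commute)
lemma sc_zero_left: "sc 0 x = 0"
  using sc_of_real[of 0 x] by simp

lemma kspan_0: "0 \<in> kspan sc A"
  unfolding kspan_def by (rule CollectI, rule exI[of _ 0]) simp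

lemma kspan_single: "x \<in> A \<Longrightarrow> sc z x \<in> kspan sc A"
  unfolding kspan_def
  by (rule CollectI, rule exI[of _ 1], rule exI[of _ "\<lambda>_. z"], rule exI[of _ "\<lambda>_. x"]) simp

lemma kspan_add: assumes "a \<in> kspan sc A" "b \<in> kspan sc A" shows "a + b \<in> kspan sc A"
proof -
  obtain n :: nat and c v where a: "a = (\<Sum>i<n. sc (c i) (v i))" "\<forall>i<n. v i \<in> A" using assms(1) unfolding kspan_def by blast
  obtain m :: nat and d w where b: "b = (\<Sum>i<m. sc (d i) (w i))" "\<forall>i<m. w i \<in> A" using assms(2) unfolding kspan_def by blast
  define c' where "c' i = (if i < n then c i else d (i - n))" for i
  define v' where "v' i = (if i < n then v i else w (i - n))" for i
  have "(\<Sum>i<n+m. sc (c' i) (v' i)) = (\<Sum>i<n. sc (c' i) (v' i)) + (\<Sum>i<m. sc (c' (n+i)) (v' (n+i)))"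
    by (rule sum_concat_nat)
  also have "\<dots> = a + b" unfolding a b c'_def v'_def by simp
  finally have "a + b = (\<Sum>i<n+m. sc (c' i) (v' i))" by simp
  moreover have "\<forall>i<n+m. v' i \<in> A" using a b unfolding v'_def by auto
  ultimately show ?thesis unfolding kspan_def by blast
qed

lemma sc_sum: "sc z (\<Sum>i<(n::nat). f i) = (\<Sum>i<n. sc z (f i))"
  by (induction n) (simp_all add: sc_zero sc_add)

lemma kspan_scaleR: assumes "a \<in> kspan sc A" shows "r *\<^sub>R a \<in> kspan sc A"
proof -
  obtain n :: nat and c v where a: "a = (\<Sum>i<n. sc (c i) (v i))" "\<forall>i<n. v i \<in> A" using assms(1) unfolding kspan_def by blast
  have "r *\<^sub>R a = (\<Sum>i<n. sc (of_real r * c i) (v i))"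
    unfolding a by (simp add: sc_of_real[symmetric] sc_sum sc_assoc)
  thus ?thesis using a(2) unfolding kspan_def mem_Collect_eq
    by (intro exI[of _ n] exI[of _ "\<lambda>i. of_real r * c i"] exI[of _ v] conjI)
qed

lemma wsc_cyclic:
  assumes "weak_closure {sc z ((T ^^ n) u) | z n. True} = UNIV"
  shows "cyclic_vector sc T u"
proof -
  have "{sc z ((T ^^ n) u) | z n. True} \<subseteq> kspan sc (range (\<lambda>n. (T ^^ n) u))"
  proof
    fix x assume "x \<in> {sc z ((T ^^ n) u) | z n. True}"
    then obtain z n where "x = sc z ((T ^^ n) u)" by blast
    moreover have "(T ^^ n) u \<in> range (\<lambda>n. (T ^^ n) u)" by simp
    ultimately show "x \<in> kspan sc (range (\<lambda>n. (T ^^ n) u))" using kspan_single by simp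
  qed
  hence "UNIV \<subseteq> weak_closure (kspan sc (range (\<lambda>n. (T ^^ n) u)))"
    using wcl_mono assms by blast
  also have "\<dots> \<subseteq> closure (kspan sc (range (\<lambda>n. (T ^^ n) u)))"
    by (rule wcl_subspace) (simp_all add: kspan_0 kspan_add kspan_scaleR)
  finally show ?thesis unfolding cyclic_vector_def by blast
qed

lemma linop_sum:
  assumes "linop sc L" shows "L (\<Sum>i<(n::nat). sc (c i) (v i)) = (\<Sum>i<n. sc (c i) (L (v i)))"
proof -
  have bl: "bounded_linear L" and cm: "\<And>c x. L (sc c x) = sc c (L x)" using assms unfolding linop_def by auto
  show ?thesis
    by (induction n) (simp_all add: linear_add[OF bounded_linear.linear[OF bl]] linear_0[OF bounded_linear.linear[OF bl]] cm)
qed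

lemma funpow_linear: fixes T :: "'b::real_normed_vector \<Rightarrow> 'b" assumes T: "bounded_linear T" shows "bounded_linear (T ^^ n)"
proof (induction n)
  case 0
  show ?case using bounded_linear_ident by (simp add: id_def)
next
  case (Suc n)
  have "bounded_linear (\<lambda>x. T ((T ^^ n) x))" by (rule bounded_linear_compose[OF T Suc])
  thus ?case by (simp add: o_def)
qed

lemma kill_cyclic:
  assumes cyc: "cyclic_vector sc T u" and T: "bounded_linear T" and W: "linop sc W"
    and TW: "\<And>x. T (W x) = W (T x)" and Wu: "W u = 0"
  shows "W x = 0"
proof -
  have bW: "bounded_linear W" using W unfolding linop_def by auto
  have pow: "W ((T ^^ n) u) = 0" for n
  proof (induction n)
    case 0 thus ?case using Wu by simp
  next
    case (Suc n)
    have "W (T ((T ^^ n) u)) = T (W ((T ^^ n) u))" using TW by simp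
    thus ?case using Suc linear_0[OF bounded_linear.linear[OF T]] by simp
  qed
  have "kspan sc (range (\<lambda>n. (T ^^ n) u)) \<subseteq> {x. W x = 0}"
  proof
    fix y assume "y \<in> kspan sc (range (\<lambda>n. (T ^^ n) u))"
    then obtain n :: nat and c v where y: "y = (\<Sum>i<n. sc (c i) (v i))" "\<forall>i<n. v i \<in> range (\<lambda>n. (T ^^ n) u)"
      unfolding kspan_def by blast
    have "W y = (\<Sum>i<n. sc (c i) (W (v i)))" unfolding y by (rule linop_sum[OF W])
    also have "\<dots> = 0" using y(2) pow by (auto simp: sc_zero intro!: sum.neutral)
    finally show "y \<in> {x. W x = 0}" by simp
  qed
  moreover have "closed {x. W x = 0}"
    by (rule closed_Collect_eq) (simp_all add: linear_continuous_on[OF bW])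
  ultimately have "closure (kspan sc (range (\<lambda>n. (T ^^ n) u))) \<subseteq> {x. W x = 0}"
    by (rule closure_minimal)
  thus ?thesis using cyc unfolding cyclic_vector_def by blast
qed

end

lemma line_closed:
  fixes sc :: "'k::{real_normed_field,banach} \<Rightarrow> 'a::real_normed_vector \<Rightarrow> 'a"
  assumes nm: "normed_module sc" and u: "u \<noteq> 0"
  shows "closed (range (\<lambda>z. sc z u))"
proof -
  interpret nmod sc by (rule nmod.intro) (rule nm)
  have bl: "bounded_linear (\<lambda>z. sc z u)"
    by (rule bounded_linear_intro[where K="norm u"]) (simp_all add: sc_add_left sc_norm sc_of_real[symmetric] sc_assoc scaleR_conv_of_real)
  have "complete ((\<lambda>z. sc z u) ` UNIV)"
    by (rule complete_isometric_image[where e="norm u"]) (use u bl in \<open>simp_all add: sc_norm complete_UNIV\<close>)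
  thus ?thesis by (rule complete_imp_closed)
qed




locale core =
  fixes sc :: "'k::{real_normed_field,banach} \<Rightarrow> 'a::banach \<Rightarrow> 'a"
    and T M B C :: "'a \<Rightarrow> 'a" and u :: 'a and G :: "'a \<Rightarrow> 'k"
    and g1 g2 :: "'a \<Rightarrow> real" and y1 :: 'a and KG :: real
  assumes nm: "normed_module sc"
    and T: "linop sc T" and M: "linop sc M" and B: "linop sc B" and C: "linop sc C"
    and TTM: "comm T (comm T M) = (\<lambda>x. 0)" and BT: "comm T B = (\<lambda>x. 0)" and CT: "comm T C = (\<lambda>x. 0)"
    and CBu: "C (M (T u)) = B u"
    and cyc: "cyclic_vector sc T u"
    and wsc: "weak_closure {sc z ((T ^^ n) u) | z n. True} = UNIV"
    and Y: "in_class_Y TYPE('a)"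
    and G_add: "\<And>a b. G (a + b) = G a + G b" and G_sc: "\<And>z a. G (sc z a) = z * G a"
    and KG: "KG > 0" "\<And>a. norm (G a) \<le> KG * norm a"
    and g1: "bounded_linear g1" and g2: "bounded_linear g2"
    and G_wc: "\<And>a b. norm (G a - G b) \<le> \<bar>g1 a - g1 b\<bar> + \<bar>g2 a - g2 b\<bar>"
    and sc_wc: "\<And>f. bounded_linear f \<Longrightarrow> \<exists>h1 h2. bounded_linear h1 \<and> bounded_linear h2 \<and>
                   (\<forall>\<eta> a. \<bar>f (sc \<eta> a)\<bar> \<le> norm \<eta> * (\<bar>h1 a\<bar> + \<bar>h2 a\<bar>))"
    and y1: "G (C (comm T M y1)) \<noteq> 0"

sublocale core \<subseteq> nmod sc by (rule nmod.intro) (rule nm)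

context core
begin

definition W :: "'a \<Rightarrow> 'a" where "W x = C (T (M x) - M (T x))"
definition D :: "'a \<Rightarrow> 'a" where "D x = C (M (T x)) - B x"

lemma blT: "bounded_linear T" and cmT: "T (sc z x) = sc z (T x)" using T unfolding linop_def by auto
lemma blM: "bounded_linear M" and cmM: "M (sc z x) = sc z (M x)" using M unfolding linop_def by auto
lemma blB: "bounded_linear B" and cmB: "B (sc z x) = sc z (B x)" using B unfolding linop_def by auto
lemma blC: "bounded_linear C" and cmC: "C (sc z x) = sc z (C x)" using C unfolding linop_def by auto

lemmas linT = linear_add[OF bounded_linear.linear[OF blT]] linear_diff[OF bounded_linear.linear[OF blT]]
  linear_0[OF bounded_linear.linear[OF blT]] linear_scale[OF bounded_linear.linear[OF blT]]
lemmas linM = linear_add[OF bounded_linear.linear[OF blM]] linear_diff[OF bounded_linear.linear[OF blM]]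
  linear_0[OF bounded_linear.linear[OF blM]] linear_scale[OF bounded_linear.linear[OF blM]]
lemmas linB = linear_add[OF bounded_linear.linear[OF blB]] linear_diff[OF bounded_linear.linear[OF blB]]
  linear_0[OF bounded_linear.linear[OF blB]] linear_scale[OF bounded_linear.linear[OF blB]]
lemmas linC = linear_add[OF bounded_linear.linear[OF blC]] linear_diff[OF bounded_linear.linear[OF blC]]
  linear_0[OF bounded_linear.linear[OF blC]] linear_scale[OF bounded_linear.linear[OF blC]]

lemma TC: "T (C x) = C (T x)" using fun_cong[OF CT, of x] unfolding comm_def by simp
lemma TB: "T (B x) = B (T x)" using fun_cong[OF BT, of x] unfolding comm_def by simp
lemma TA: "T (T (M x) - M (T x)) = T (M (T x)) - M (T (T x))"
  using fun_cong[OF TTM, of x] unfolding comm_def by simp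

lemma blW: "bounded_linear W"
  unfolding W_def[abs_def]
  by (intro bounded_linear_compose[OF blC] bounded_linear_sub bounded_linear_compose[OF blT blM]
        bounded_linear_compose[OF blM blT])
lemma blD: "bounded_linear D"
  unfolding D_def[abs_def]
  by (intro bounded_linear_sub bounded_linear_compose[OF blC] bounded_linear_compose[OF blM blT] blB)

lemma cmW: "W (sc z x) = sc z (W x)" unfolding W_def by (simp add: cmT cmM cmC sc_diff linC)
lemma cmD: "D (sc z x) = sc z (D x)" unfolding D_def by (simp add: cmT cmM cmC cmB sc_diff)

lemmas linW = linear_add[OF bounded_linear.linear[OF blW]] linear_diff[OF bounded_linear.linear[OF blW]]
  linear_0[OF bounded_linear.linear[OF blW]] linear_scale[OF bounded_linear.linear[OF blW]]
  linear_neg[OF bounded_linear.linear[OF blW]]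
lemmas linD = linear_add[OF bounded_linear.linear[OF blD]] linear_diff[OF bounded_linear.linear[OF blD]]
  linear_0[OF bounded_linear.linear[OF blD]] linear_scale[OF bounded_linear.linear[OF blD]]

lemma TW: "T (W x) = W (T x)" unfolding W_def by (simp add: TC TA)

lemma TD: "T (D x) - D (T x) = W (T x)"
  unfolding D_def W_def by (simp add: linT TC TB linC)

lemma Dpow: "D ((T ^^ n) x) = (T ^^ n) (D x) - real n *\<^sub>R W ((T ^^ n) x)"
proof (induction n)
  case 0 thus ?case by simp
next
  case (Suc n)
  let ?y = "(T ^^ n) x"
  have "D (T ?y) = T (D ?y) - W (T ?y)" using TD[of ?y] by (simp add: algebra_simps)
  also have "T (D ?y) = T ((T ^^ n) (D x)) - real n *\<^sub>R W (T ?y)" using Suc by (simp add: linT TW)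
  finally have "D (T ?y) = T ((T ^^ n) (D x)) - (real n + 1) *\<^sub>R W (T ?y)" by (simp add: algebra_simps)
  thus ?case by simp
qed

lemma Du: "D u = 0" unfolding D_def using CBu by simp

lemma funpow0: "(T ^^ n) 0 = 0"
  by (induction n) (simp_all add: linT)

lemma DO: "D (sc z ((T ^^ n) u)) = - real n *\<^sub>R W (sc z ((T ^^ n) u))"
proof -
  have "D ((T ^^ n) u) = - real n *\<^sub>R W ((T ^^ n) u)" using Dpow[of n u] by (simp add: Du funpow0)
  thus ?thesis by (simp add: cmD cmW sc_scaleR sc_minus)
qed

lemma G0: "G 0 = 0" using G_add[of 0 0] by simp
lemma G_minus: "G (- a) = - G a" using G_add[of a "-a"] G0 by (simp add: eq_neg_iff_add_eq_0 add.commute)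
lemma G_diff: "G (a - b) = G a - G b" using G_add[of a "-b"] G_minus[of b] by simp
lemma G_scaleR: "G (r *\<^sub>R a) = of_real r * G a" using G_sc[of "of_real r" a] by (simp add: sc_of_real)

lemma W_fun: "C \<circ> comm T M = W" unfolding W_def[abs_def] comm_def by (simp add: o_def)

lemma Wy1: "W y1 \<noteq> 0"
  using y1 G0 W_fun unfolding comp_def by (metis)

lemma Wu: "W u \<noteq> 0"
proof
  assume "W u = 0"
  have lW: "linop sc W" unfolding linop_def using blW cmW by blast
  have "W y1 = 0" by (rule kill_cyclic[OF cyc blT lW]) (simp_all add: TW \<open>W u = 0\<close>)
  thus False using Wy1 by simp
qed

definition y0 where "y0 = sc (1 / G (W y1)) y1"
lemma Gy0: "G (W y0) = 1"
proof -
  have "G (W y1) \<noteq> 0" using y1 W_fun unfolding comp_def by metis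
  thus ?thesis unfolding y0_def by (simp add: cmW G_sc)
qed


lemma norm_wcl:
  assumes y: "y \<in> weak_closure S" and Gy: "G (W y) = 1"
  shows "y \<in> weak_closure {sc (1 / G (W x)) x | x. x \<in> S \<and> G (W x) \<noteq> 0}"
proof (rule wclI)
  fix F :: "('a \<Rightarrow> real) set" and \<epsilon> :: real
  assume F: "finite F" "\<forall>f\<in>F. bounded_linear f" and eps: "\<epsilon> > 0"
  have "\<forall>f. \<exists>p. bounded_linear f \<longrightarrow> (bounded_linear (fst p) \<and> bounded_linear (snd p) \<and>
          (\<forall>\<eta> a. \<bar>f (sc \<eta> a)\<bar> \<le> norm \<eta> * (\<bar>fst p a\<bar> + \<bar>snd p a\<bar>)))"
  proof
    fix f
    show "\<exists>p. bounded_linear f \<longrightarrow> (bounded_linear (fst p) \<and> bounded_linear (snd p) \<and>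
          (\<forall>\<eta> a. \<bar>f (sc \<eta> a)\<bar> \<le> norm \<eta> * (\<bar>fst p a\<bar> + \<bar>snd p a\<bar>)))"
    proof (cases "bounded_linear f")
      case True
      then obtain h1 h2 where "bounded_linear h1" "bounded_linear h2"
          "\<forall>\<eta> a. \<bar>f (sc \<eta> a)\<bar> \<le> norm \<eta> * (\<bar>h1 a\<bar> + \<bar>h2 a\<bar>)" using sc_wc by blast
      thus ?thesis by (intro exI[of _ "(h1, h2)"]) simp
    qed simp
  qed
  from choice[OF this] obtain P where P: "\<And>f. bounded_linear f \<Longrightarrow> bounded_linear (fst (P f)) \<and> bounded_linear (snd (P f)) \<and>
          (\<forall>\<eta> a. \<bar>f (sc \<eta> a)\<bar> \<le> norm \<eta> * (\<bar>fst (P f) a\<bar> + \<bar>snd (P f) a\<bar>))" by blast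
  define K0 where "K0 = (\<Sum>f\<in>F. \<bar>fst (P f) y\<bar> + \<bar>snd (P f) y\<bar> + 2)"
  have K0: "K0 \<ge> 0" unfolding K0_def by (intro sum_nonneg) simp
  define e where "e = min (1/2) (\<epsilon> / (4 * (K0 + 1)))"
  have "\<epsilon> / (4 * (K0 + 1)) > 0" using eps K0 by simp
  hence e: "e > 0" "e \<le> 1/2" "e \<le> \<epsilon> / (4 * (K0 + 1))" unfolding e_def by (simp_all add: min_def)
  define \<delta> where "\<delta> = min (e/2) (min 1 (\<epsilon>/2))"
  have \<delta>: "\<delta> > 0" "\<delta> \<le> e/2" "\<delta> \<le> 1" "\<delta> \<le> \<epsilon>/2" unfolding \<delta>_def using e eps by auto
  define F' where "F' = F \<union> (\<lambda>f. fst (P f)) ` F \<union> (\<lambda>f. snd (P f)) ` F \<union> {\<lambda>x. g1 (W x), \<lambda>x. g2 (W x)}"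
  have F'1: "finite F'" unfolding F'_def using F by simp
  have F'2: "\<forall>f\<in>F'. bounded_linear f" unfolding F'_def using F P
    by (auto intro: bounded_linear_compose[OF g1 blW] bounded_linear_compose[OF g2 blW])
  obtain x where x: "x \<in> S" "\<forall>f\<in>F'. \<bar>f x - f y\<bar> < \<delta>" using wclD[OF y F'1 F'2 \<delta>(1)] by blast
  have "\<bar>g1 (W x) - g1 (W y)\<bar> < \<delta>" "\<bar>g2 (W x) - g2 (W y)\<bar> < \<delta>" using x(2) unfolding F'_def by auto
  hence "norm (G (W x) - G (W y)) < e" using G_wc[of "W x" "W y"] \<delta> by linarith
  hence g: "norm (G (W x) - 1) < e" using Gy by simp
  define \<gamma> where "\<gamma> = G (W x)"
  have "norm \<gamma> \<ge> 1/2"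
  proof -
    have "norm (1::'k) \<le> norm \<gamma> + norm (\<gamma> - 1)" using norm_triangle_ineq4[of \<gamma> "\<gamma> - 1"] by simp
    thus ?thesis using g e unfolding \<gamma>_def by simp
  qed
  hence g0: "\<gamma> \<noteq> 0" by auto
  define \<zeta> where "\<zeta> = 1 / \<gamma>"
  have "\<zeta> - 1 = (1 - \<gamma>) / \<gamma>" unfolding \<zeta>_def using g0 by (simp add: field_simps)
  hence "norm (\<zeta> - 1) = norm (\<gamma> - 1) / norm \<gamma>" by (simp add: norm_divide norm_minus_commute)
  also have "\<dots> \<le> e / (1/2)"
    using g e \<open>norm \<gamma> \<ge> 1/2\<close> unfolding \<gamma>_def by (intro frac_le) auto
  finally have z1: "norm (\<zeta> - 1) \<le> 2 * e" by simp
  have mem: "sc \<zeta> x \<in> {sc (1 / G (W x)) x | x. x \<in> S \<and> G (W x) \<noteq> 0}"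
    using x(1) g0 unfolding \<zeta>_def \<gamma>_def by blast
  have "\<forall>f\<in>F. \<bar>f (sc \<zeta> x) - f y\<bar> < \<epsilon>"
  proof
    fix f assume fF: "f \<in> F"
    have blf: "bounded_linear f" using F fF by blast
    have Pf: "bounded_linear (fst (P f))" "bounded_linear (snd (P f))"
       "\<And>\<eta> a. \<bar>f (sc \<eta> a)\<bar> \<le> norm \<eta> * (\<bar>fst (P f) a\<bar> + \<bar>snd (P f) a\<bar>)" using P[OF blf] by auto
    have "sc \<zeta> x = sc (\<zeta> - 1) x + x" using sc_add_left[of "\<zeta> - 1" 1 x] by (simp add: sc_one)
    hence "f (sc \<zeta> x) - f y = f (sc (\<zeta> - 1) x) + (f x - f y)"
      using linear_add[OF bounded_linear.linear[OF blf]] by simp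
    hence "\<bar>f (sc \<zeta> x) - f y\<bar> \<le> \<bar>f (sc (\<zeta> - 1) x)\<bar> + \<bar>f x - f y\<bar>" by simp
    moreover have "\<bar>f x - f y\<bar> < \<delta>" using x(2) fF unfolding F'_def by auto
    moreover have "\<bar>f (sc (\<zeta> - 1) x)\<bar> \<le> 2 * e * K0"
    proof -
      have a1: "\<bar>fst (P f) x - fst (P f) y\<bar> < \<delta>" "\<bar>snd (P f) x - snd (P f) y\<bar> < \<delta>"
        using x(2) fF unfolding F'_def by auto
      have "\<bar>fst (P f) x\<bar> + \<bar>snd (P f) x\<bar> \<le> \<bar>fst (P f) y\<bar> + \<bar>snd (P f) y\<bar> + 2"
        using a1 \<delta> by linarith
      also have "\<dots> \<le> K0" unfolding K0_def
        by (rule member_le_sum[OF fF, where f="\<lambda>f. \<bar>fst (P f) y\<bar> + \<bar>snd (P f) y\<bar> + 2"]) (simp_all add: F)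
      finally have s1: "\<bar>fst (P f) x\<bar> + \<bar>snd (P f) x\<bar> \<le> K0" .
      have "\<bar>f (sc (\<zeta> - 1) x)\<bar> \<le> norm (\<zeta> - 1) * (\<bar>fst (P f) x\<bar> + \<bar>snd (P f) x\<bar>)" by (rule Pf(3))
      also have "\<dots> \<le> (2 * e) * K0" by (rule mult_mono[OF z1 s1]) (use e in auto)
      finally show ?thesis by simp
    qed
    moreover have "2 * e * K0 \<le> \<epsilon> / 2"
    proof -
      have "2 * e * K0 \<le> 2 * (\<epsilon> / (4 * (K0 + 1))) * K0" using e K0 by (intro mult_right_mono) auto
      also have "\<dots> = \<epsilon> / 2 * (K0 / (K0 + 1))" using K0 by (simp add: field_simps)
      also have "\<dots> \<le> \<epsilon> / 2" using K0 eps by (intro mult_left_le) auto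
      finally show ?thesis .
    qed
    ultimately show "\<bar>f (sc \<zeta> x) - f y\<bar> < \<epsilon>" using \<delta> by linarith
  qed
  thus "\<exists>s\<in>{sc (1 / G (W x)) x | x. x \<in> S \<and> G (W x) \<noteq> 0}. \<forall>f\<in>F. \<bar>f s - f y\<bar> < \<epsilon>"
    using mem by blast
qed


definition vv :: "nat \<Rightarrow> 'a" where
  "vv n = (if G (W ((T ^^ n) u)) \<noteq> 0 then W (sc (1 / G (W ((T ^^ n) u))) ((T ^^ n) u)) else W y0)"

lemma Gvv: "G (vv n) = 1"
  unfolding vv_def using Gy0 by (simp add: cmW G_sc)

lemma vv_norm: "1 \<le> KG * norm (vv n)"
  using KG(2)[of "vv n"] Gvv[of n] by simp

definition ss :: "real \<Rightarrow> nat \<Rightarrow> 'a" where "ss l n = (l - real n) *\<^sub>R vv n"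

lemma ss_closed: "weakly_closed (range (ss l))"
proof -
  have "(\<lambda>n. real n) \<in> O(\<lambda>n. norm (ss l n))"
  proof (rule bigoI[where c="2 * KG"])
    show "\<forall>\<^sub>F n in at_top. norm (real n) \<le> 2 * KG * norm (norm (ss l n))"
    proof (rule eventually_mono[OF eventually_ge_at_top[of "nat \<lceil>2 * \<bar>l\<bar>\<rceil>"]])
      fix n assume n: "nat \<lceil>2 * \<bar>l\<bar>\<rceil> \<le> n"
      hence n2: "2 * \<bar>l\<bar> \<le> real n" by linarith
      have "real n \<le> 2 * \<bar>l - real n\<bar>"
        using n2 by (auto simp: abs_if split: if_splits)
      also have "\<dots> \<le> 2 * \<bar>l - real n\<bar> * (KG * norm (vv n))"
        using mult_left_mono[OF vv_norm[of n], of "2 * \<bar>l - real n\<bar>"] by simp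
      also have "\<dots> = 2 * KG * norm (ss l n)" unfolding ss_def by simp
      finally show "norm (real n) \<le> 2 * KG * norm (norm (ss l n))" by simp
    qed
  qed
  thus ?thesis using Y unfolding in_class_Y_def by blast
qed

definition Orb where "Orb = {sc z ((T ^^ n) u) | z n. True}"

lemma E_in: assumes Gy: "G (W y) = 1" shows "D y + l *\<^sub>R W y \<in> range (ss l)"
proof -
  let ?N = "{sc (1 / G (W x)) x | x. x \<in> Orb \<and> G (W x) \<noteq> 0}"
  let ?E = "\<lambda>x. D x + l *\<^sub>R W x"
  have blE: "bounded_linear ?E"
    by (rule bounded_linear_add[OF blD]) (rule bounded_linear_compose[OF bounded_linear_scaleR_right blW])
  have "y \<in> weak_closure Orb" using wsc unfolding Orb_def by simp
  hence "y \<in> weak_closure ?N" by (rule norm_wcl[OF _ Gy])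
  hence "?E y \<in> weak_closure (?E ` ?N)" by (rule wcl_image[OF blE])
  moreover have "?E ` ?N \<subseteq> range (ss l)"
  proof
    fix w assume "w \<in> ?E ` ?N"
    then obtain x where x: "x \<in> Orb" "G (W x) \<noteq> 0" "w = ?E (sc (1 / G (W x)) x)" by blast
    then obtain z n where xz: "x = sc z ((T ^^ n) u)" unfolding Orb_def by blast
    define c where "c = G (W ((T ^^ n) u))"
    have Gx: "G (W x) = z * c" unfolding xz c_def by (simp add: cmW G_sc)
    hence c0: "c \<noteq> 0" and z0: "z \<noteq> 0" using x(2) by auto
    have "sc (1 / G (W x)) x = sc (1 / (z * c)) (sc z ((T ^^ n) u))" using Gx xz by simp
    also have "\<dots> = sc (1 / (z * c) * z) ((T ^^ n) u)" by (simp add: sc_assoc)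
    also have "1 / (z * c) * z = 1 / c" using z0 c0 by (simp add: field_simps)
    finally have "sc (1 / G (W x)) x = sc (1 / c) ((T ^^ n) u)" .
    hence "w = ?E (sc (1 / c) ((T ^^ n) u))" using x(3) by simp
    also have "\<dots> = (l - real n) *\<^sub>R W (sc (1 / c) ((T ^^ n) u))"
      by (simp add: DO algebra_simps)
    also have "W (sc (1 / c) ((T ^^ n) u)) = vv n" unfolding vv_def c_def[symmetric] using c0 by simp
    finally have "w = ss l n" unfolding ss_def .
    thus "w \<in> range (ss l)" by simp
  qed
  ultimately have "?E y \<in> weak_closure (range (ss l))" using wcl_mono by blast
  thus ?thesis using ss_closed[of l] unfolding weakly_closed_def by blast
qed

lemma of_real_inj_k: "(of_real a :: 'k) = of_real b \<Longrightarrow> a = b" by simp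

lemma main_H: assumes Gy: "G (W y) = 1" shows "\<exists>n::nat. D y = - real n *\<^sub>R W y"
proof -
  have Gss: "G (ss l n) = of_real (l - real n)" for l n unfolding ss_def by (simp add: G_scaleR Gvv)
  obtain m where m: "D y + 0 *\<^sub>R W y = ss 0 m" using E_in[OF Gy, of 0] by auto
  have GD: "G (D y) = of_real (- real m)" using arg_cong[OF m, of G] by (simp add: Gss)
  have step: "D y + (real m + real j) *\<^sub>R W y = real j *\<^sub>R vv m" if "j > 0" for j :: nat
  proof -
    obtain k where k: "D y + (real m + real j) *\<^sub>R W y = ss (real m + real j) k"
      using E_in[OF Gy, of "real m + real j"] by auto
    have "G (D y) + of_real (real m + real j) * G (W y) = of_real (real m + real j - real k)"
      using arg_cong[OF k, of G] by (simp add: Gss G_add G_scaleR)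
    hence "of_real (- real m + (real m + real j)) = (of_real (real m + real j - real k) :: 'k)"
      using GD Gy by simp
    hence "- real m + (real m + real j) = real m + real j - real k" by (rule of_real_inj_k)
    hence "k = m" by simp
    thus ?thesis using k unfolding ss_def by simp
  qed
  have e1: "D y + (real m + 1) *\<^sub>R W y = vv m" using step[of 1] by simp
  have e2: "D y + (real m + 2) *\<^sub>R W y = 2 *\<^sub>R vv m" using step[of 2] by simp
  have "W y = vv m"
  proof -
    have "W y = (D y + (real m + 2) *\<^sub>R W y) - (D y + (real m + 1) *\<^sub>R W y)"
      by (simp add: algebra_simps scaleR_2)
    also have "\<dots> = 2 *\<^sub>R vv m - vv m" using e1 e2 by simp
    also have "\<dots> = vv m" by (simp add: scaleR_2)
    finally show ?thesis .
  qed
  moreover have "D y = vv m - (real m + 1) *\<^sub>R W y" using e1 by (simp add: eq_diff_eq)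
  moreover have "vv m - (real m + 1) *\<^sub>R vv m = - real m *\<^sub>R vv m" by (simp add: algebra_simps)
  ultimately have "D y = - real m *\<^sub>R W y" by simp
  thus ?thesis by blast
qed


lemma GD_H: assumes "G (W y) = 1" obtains n :: nat where "D y = - real n *\<^sub>R W y" "G (D y) = of_real (- real n)"
proof -
  obtain n :: nat where n: "D y = - real n *\<^sub>R W y" using main_H[OF assms] by blast
  moreover have "G (D y) = of_real (- real n)" using n assms by (simp add: G_scaleR G_minus)
  ultimately show ?thesis using that by blast
qed

lemma D_ker:
  assumes h: "G (W h) = 0" and n0: "D y0 = - real n0 *\<^sub>R W y0"
  shows "D h = - real n0 *\<^sub>R W h"
proof -
  have Gt: "G (W (y0 + t *\<^sub>R h)) = 1" for t
    by (simp add: linW G_add G_scaleR Gy0 h)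
  have GDy0: "G (D y0) = of_real (- real n0)" using n0 Gy0 by (simp add: G_scaleR G_minus)
  define c where "c = G (D h)"
  have Gt2: "G (D (y0 + t *\<^sub>R h)) = of_real (- real n0) + of_real t * c" for t
    unfolding c_def by (simp add: linD G_add G_scaleR GDy0)
  obtain n1 :: nat where n1: "D (y0 + 1 *\<^sub>R h) = - real n1 *\<^sub>R W (y0 + 1 *\<^sub>R h)"
      "G (D (y0 + 1 *\<^sub>R h)) = of_real (- real n1)" using GD_H[OF Gt[of 1]] by blast
  have c1: "c = of_real (real n0 - real n1)"
    using Gt2[of 1] n1(2) by (simp add: algebra_simps)
  have "real n0 = real n1"
  proof (rule ccontr)
    assume ne: "real n0 \<noteq> real n1"
    define q where "q = real n0 - real n1"
    have q0: "q \<noteq> 0" using ne q_def by simp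
    obtain nt :: nat where nt: "G (D (y0 + (1 / (2 * q)) *\<^sub>R h)) = of_real (- real nt)"
      using GD_H[OF Gt[of "1 / (2 * q)"]] by blast
    have "of_real (- real nt) = (of_real (- real n0) + of_real (1 / (2 * q)) * of_real q :: 'k)"
      using nt Gt2[of "1 / (2 * q)"] c1 q_def by simp
    also have "\<dots> = of_real (- real n0 + 1 / 2)" using q0 by (simp add: of_real_mult[symmetric] of_real_add[symmetric])
    finally have "- real nt = - real n0 + 1 / 2" by (rule of_real_inj_k)
    hence "real (2 * n0) = real (2 * nt + 1)" by simp
    hence "2 * n0 = 2 * nt + 1" by (simp only: of_nat_eq_iff)
    thus False by presburger
  qed
  hence "n1 = n0" by simp
  hence "D (y0 + h) = - real n0 *\<^sub>R W (y0 + h)" using n1(1) by simp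
  thus ?thesis using n0 by (simp add: linD linW algebra_simps)
qed

lemma D_zero: "D x = 0"
proof -
  obtain n0 :: nat where n0: "D y0 = - real n0 *\<^sub>R W y0" using main_H[OF Gy0] by blast
  have Dall: "D x = - real n0 *\<^sub>R W x" for x
  proof -
    define h where "h = x - sc (G (W x)) y0"
    have "G (W h) = 0" unfolding h_def by (simp add: linW cmW G_diff G_sc Gy0)
    hence "D h = - real n0 *\<^sub>R W h" by (rule D_ker[OF _ n0])
    moreover have "x = h + sc (G (W x)) y0" unfolding h_def by simp
    ultimately have "D x = - real n0 *\<^sub>R W h + sc (G (W x)) (- real n0 *\<^sub>R W y0)"
      using n0 by (metis cmD linD(1))
    also have "\<dots> = - real n0 *\<^sub>R (W h + W (sc (G (W x)) y0))"
      by (simp add: cmW sc_minus sc_scaleR algebra_simps)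
    also have "W h + W (sc (G (W x)) y0) = W x" unfolding h_def by (simp add: linW)
    finally show ?thesis .
  qed
  have "real n0 *\<^sub>R W u = 0" using Dall[of u] Du by simp
  hence "n0 = 0" using Wu by simp
  thus ?thesis using Dall[of x] by simp
qed

lemma WT0: "W (T x) = 0" using TD[of x] by (simp add: D_zero linT)

lemma core_false: False
proof -
  let ?L = "range (\<lambda>z. sc z u)"
  let ?K = "{x. W x = 0}"
  have u0: "u \<noteq> 0" using Wu linW by auto
  have OL: "{sc z ((T ^^ n) u) | z n. True} \<subseteq> ?L \<union> ?K"
  proof
    fix x assume "x \<in> {sc z ((T ^^ n) u) | z n. True}"
    then obtain z n where x: "x = sc z ((T ^^ n) u)" by blast
    show "x \<in> ?L \<union> ?K"
    proof (cases n)
      case 0 thus ?thesis using x by simp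
    next
      case (Suc m)
      have "W x = sc z (W (T ((T ^^ m) u)))" using x Suc by (simp add: cmW)
      thus ?thesis by (simp add: WT0 sc_zero)
    qed
  qed
  have Lc: "closure ?L = ?L" using line_closed[OF nm u0] by (simp add: closure_closed)
  have Kc: "closure ?K = ?K"
    by (rule closure_closed, rule closed_Collect_eq) (simp_all add: linear_continuous_on[OF blW])
  have "UNIV \<subseteq> weak_closure (?L \<union> ?K)" using wsc wcl_mono[OF OL] by simp
  also have "\<dots> \<subseteq> weak_closure ?L \<union> weak_closure ?K" by (rule wcl_Un)
  also have "weak_closure ?L \<subseteq> ?L"
  proof -
    have "weak_closure ?L \<subseteq> closure ?L"
    proof (rule wcl_subspace)
      show "0 \<in> ?L" using sc_zero_left by (metis rangeI)
      show "a + b \<in> ?L" if "a \<in> ?L" "b \<in> ?L" for a b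
        using that by (auto simp: sc_add_left[symmetric])
      show "c *\<^sub>R a \<in> ?L" if "a \<in> ?L" for a c
        using that by (auto simp: sc_of_real[symmetric] sc_assoc)
    qed
    thus ?thesis using Lc by simp
  qed
  also have "weak_closure ?K \<subseteq> ?K"
  proof -
    have "weak_closure ?K \<subseteq> closure ?K"
      by (rule wcl_subspace) (simp_all add: linW)
    thus ?thesis using Kc by simp
  qed
  finally have all: "\<And>x. x \<in> ?L \<or> W x = 0" by blast
  show False
  proof (cases "\<exists>h. W h = 0 \<and> h \<notin> ?L")
    case True
    then obtain h where h: "W h = 0" "h \<notin> ?L" by blast
    have "W (u + h) \<noteq> 0" using h Wu by (simp add: linW)
    then obtain z where z: "u + h = sc z u" using all[of "u + h"] by blast
    have s1: "sc z u = sc (z - 1) u + u" using sc_add_left[of "z - 1" 1 u] by (simp add: sc_one)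
    have "h = sc z u - u" using z by (simp add: algebra_simps)
    hence "h = sc (z - 1) u" using s1 by simp
    thus False using h by blast
  next
    case False
    hence allL: "\<And>x. \<exists>z. x = sc z u" using all by blast
    obtain a where a: "T u = sc a u" using allL by blast
    obtain m where m: "M u = sc m u" using allL by blast
    have "W x = 0" for x
    proof -
      obtain z where z: "x = sc z u" using allL by blast
      have "T (M x) = sc (z * (m * a)) u" unfolding z by (simp add: cmM cmT m a sc_assoc mult.assoc)
      moreover have "M (T x) = sc (z * (a * m)) u" unfolding z by (simp add: cmM cmT m a sc_assoc mult.assoc)
      ultimately show ?thesis unfolding W_def by (simp add: mult.commute linC)
    qed
    thus False using Wy1 by simp
  qed
qed

end




lemma extract_data:
  fixes sc :: "'k::real_normed_field \<Rightarrow> 'a::banach \<Rightarrow> 'a"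
  assumes nm: "normed_module sc"
    and H: "\<forall>u v. cyclic_vector sc T u \<longrightarrow>
               (\<exists>B\<in>centralizer sc T. \<exists>C\<in>centralizer sc T.
                  C \<circ> comm T M \<noteq> (\<lambda>x. 0) \<and> C v = B u)"
    and ws: "weakly_supercyclic sc T"
  obtains u B C y2 g where "cyclic_vector sc T u" "weak_closure {sc z ((T ^^ n) u) | z n. True} = UNIV"
    "linop sc B" "comm T B = (\<lambda>x. 0)" "linop sc C" "comm T C = (\<lambda>x. 0)"
    "C (M (T u)) = B u" "bounded_linear (g :: 'a \<Rightarrow> real)" "g (C (comm T M y2)) = 1"
proof -
  interpret nmod sc by (rule nmod.intro) (rule nm)
  obtain u where u: "weak_closure {sc z ((T ^^ n) u) | z n. True} = UNIV"
    using ws unfolding weakly_supercyclic_def by blast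
  have cyc: "cyclic_vector sc T u" by (rule wsc_cyclic[OF u])
  obtain B C where B: "B \<in> centralizer sc T" and C: "C \<in> centralizer sc T"
    and CW: "C \<circ> comm T M \<noteq> (\<lambda>x. 0)" and CB: "C (M (T u)) = B u"
    using H cyc by blast
  obtain y2 where y2: "C (comm T M y2) \<noteq> 0" using CW by (auto simp: fun_eq_iff)
  obtain g :: "'a \<Rightarrow> real" where g: "bounded_linear g" "g (C (comm T M y2)) = 1"
    using point_sep[OF y2] by blast
  have B': "linop sc B" "comm T B = (\<lambda>x. 0)" using B unfolding centralizer_def by auto
  have C': "linop sc C" "comm T C = (\<lambda>x. 0)" using C unfolding centralizer_def by auto
  show ?thesis by (rule that[OF cyc u B' C' CB g])
qed

lemma normed_module_real: "normed_module (scaleR :: real \<Rightarrow> 'a::real_normed_vector \<Rightarrow> 'a)"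
  unfolding normed_module_def by (simp add: scaleR_add_right scaleR_add_left)

lemma real_case:
  fixes T M :: "'a::banach \<Rightarrow> 'a"
  assumes Y: "in_class_Y TYPE('a)" and T: "linop scaleR T" and M: "linop scaleR M"
    and TTM: "comm T (comm T M) = (\<lambda>x. 0)"
    and H: "\<forall>u v. cyclic_vector scaleR T u \<longrightarrow>
               (\<exists>B\<in>centralizer scaleR T. \<exists>C\<in>centralizer scaleR T.
                  C \<circ> comm T M \<noteq> (\<lambda>x. 0) \<and> C v = B u)"
  shows "\<not> weakly_supercyclic scaleR T"
proof
  assume ws: "weakly_supercyclic scaleR T"
  obtain u B C y2 g where e: "cyclic_vector scaleR T u" "weak_closure {z *\<^sub>R ((T ^^ n) u) | z n. True} = UNIV"
    "linop scaleR B" "comm T B = (\<lambda>x. 0)" "linop scaleR C" "comm T C = (\<lambda>x. 0)"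
    "C (M (T u)) = B u" "bounded_linear (g :: 'a \<Rightarrow> real)" "g (C (comm T M y2)) = 1"
    by (rule extract_data[OF normed_module_real H ws])
  obtain K where K: "K > 0" "\<And>x. norm (g x) \<le> norm x * K"
    using bounded_linear.pos_bounded[OF e(8)] by blast
  have "core scaleR T M B C u g g (\<lambda>x. 0) y2 K"
  proof (rule core.intro)
    show "normed_module (scaleR :: real \<Rightarrow> 'a \<Rightarrow> 'a)" by (rule normed_module_real)
    show "linop scaleR T" "linop scaleR M" "linop scaleR B" "linop scaleR C" using T M e by auto
    show "comm T (comm T M) = (\<lambda>x. 0)" "comm T B = (\<lambda>x. 0)" "comm T C = (\<lambda>x. 0)" using TTM e by auto
    show "C (M (T u)) = B u" "cyclic_vector scaleR T u"
      "weak_closure {z *\<^sub>R ((T ^^ n) u) | z n. True} = UNIV" using e by auto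
    show "in_class_Y TYPE('a)" by (rule Y)
    show "g (a + b) = g a + g b" for a b using e(8) by (simp add: linear_add bounded_linear.linear)
    show "g (z *\<^sub>R a) = z * g a" for z a using e(8) by (simp add: linear_scale bounded_linear.linear)
    show "K > 0" by (rule K(1))
    show "norm (g a) \<le> K * norm a" for a using K(2)[of a] by (simp add: mult.commute)
    show "bounded_linear g" by (rule e(8))
    show "bounded_linear (\<lambda>x::'a. 0::real)" by (rule bounded_linear_zero)
    show "norm (g a - g b) \<le> \<bar>g a - g b\<bar> + \<bar>(0::real) - 0\<bar>" for a b by simp
    show "\<exists>h1 h2. bounded_linear h1 \<and> bounded_linear h2 \<and> (\<forall>\<eta> a. \<bar>f (\<eta> *\<^sub>R a)\<bar> \<le> norm \<eta> * (\<bar>h1 a\<bar> + \<bar>h2 a\<bar>))"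
      if f: "bounded_linear f" for f :: "'a \<Rightarrow> real"
      using f bounded_linear_zero by (intro exI[of _ f] exI[of _ "\<lambda>x. 0"]) (simp add: linear_scale bounded_linear.linear abs_mult)
    show "g (C (comm T M y2)) \<noteq> 0" using e(9) by simp
  qed
  thus False by (rule core.core_false)
qed


lemma sc_complex_split:
  fixes sc' :: "complex \<Rightarrow> 'a::real_normed_vector \<Rightarrow> 'a"
  assumes "normed_module sc'"
  shows "sc' z a = Re z *\<^sub>R a + Im z *\<^sub>R sc' \<i> a"
proof -
  have nm': "normed_module sc'" by (rule assms(1))
  have "z = of_real (Re z) + of_real (Im z) * \<i>" by (simp add: complex_eq_iff)
  hence "sc' z a = sc' (of_real (Re z)) a + sc' (of_real (Im z) * \<i>) a"
    using nm' unfolding normed_module_def by metis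
  also have "sc' (of_real (Im z) * \<i>) a = sc' (of_real (Im z)) (sc' \<i> a)"
    using nm' unfolding normed_module_def by metis
  finally show ?thesis using nm' unfolding normed_module_def by metis
qed

lemma complex_case:
  fixes T M :: "'b::banach \<Rightarrow> 'b" and sc :: "complex \<Rightarrow> 'b \<Rightarrow> 'b"
  assumes nm: "normed_module sc" and Y: "in_class_Y TYPE('b)" and T: "linop sc T" and M: "linop sc M"
    and TTM: "comm T (comm T M) = (\<lambda>x. 0)"
    and H: "\<forall>u v. cyclic_vector sc T u \<longrightarrow>
               (\<exists>B\<in>centralizer sc T. \<exists>C\<in>centralizer sc T.
                  C \<circ> comm T M \<noteq> (\<lambda>x. 0) \<and> C v = B u)"
  shows "\<not> weakly_supercyclic sc T"
proof
  assume ws: "weakly_supercyclic sc T"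
  interpret nmod sc by (rule nmod.intro) (rule nm)
  have split: "sc z a = Re z *\<^sub>R a + Im z *\<^sub>R sc \<i> a" for z a
    by (rule sc_complex_split[OF nm])
  obtain u B C y2 g where e: "cyclic_vector sc T u" "weak_closure {sc z ((T ^^ n) u) | z n. True} = UNIV"
    "linop sc B" "comm T B = (\<lambda>x. 0)" "linop sc C" "comm T C = (\<lambda>x. 0)"
    "C (M (T u)) = B u" "bounded_linear (g :: 'b \<Rightarrow> real)" "g (C (comm T M y2)) = 1"
    by (rule extract_data[OF nm H ws])
  have blg: "bounded_linear g" by (rule e(8))
  have lg: "g (a + b) = g a + g b" "g (r *\<^sub>R a) = r * g a" "g (a - b) = g a - g b" for a b r
    using blg by (simp_all add: linear_add linear_scale linear_diff bounded_linear.linear)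
  obtain K where K: "K > 0" "\<And>x. norm (g x) \<le> norm x * K"
    using bounded_linear.pos_bounded[OF blg] by blast
  define g2 where "g2 x = g (sc \<i> x)" for x
  have bg2: "bounded_linear g2" unfolding g2_def[abs_def] by (rule bounded_linear_compose[OF blg sc_bl])
  define G where "G x = complex_of_real (g x) - \<i> * complex_of_real (g2 x)" for x
  have ReG: "Re (G x) = g x" for x unfolding G_def by simp
  have gsc: "g (sc z a) = Re z * g a + Im z * g2 a" for z a
    unfolding g2_def split[of z a] lg by simp
  have g2sc: "g2 (sc z a) = - Im z * g a + Re z * g2 a" for z a
  proof -
    have "g2 (sc z a) = g (sc (\<i> * z) a)" unfolding g2_def by (simp add: sc_assoc)
    also have "\<dots> = - Im z * g a + Re z * g2 a" by (simp add: gsc)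
    finally show ?thesis .
  qed
  have nb: "norm (complex_of_real p - \<i> * complex_of_real q) \<le> \<bar>p\<bar> + \<bar>q\<bar>" for p q
  proof -
    have "norm (complex_of_real p - \<i> * complex_of_real q) \<le> norm (complex_of_real p) + norm (\<i> * complex_of_real q)"
      by (rule norm_triangle_ineq4)
    thus ?thesis by (simp add: norm_mult)
  qed
  have "core sc T M B C u G g g2 y2 (2 * K)"
  proof (rule core.intro)
    show "normed_module sc" by (rule nm)
    show "linop sc T" "linop sc M" "linop sc B" "linop sc C" using T M e by auto
    show "comm T (comm T M) = (\<lambda>x. 0)" "comm T B = (\<lambda>x. 0)" "comm T C = (\<lambda>x. 0)" using TTM e by auto
    show "C (M (T u)) = B u" "cyclic_vector sc T u"
      "weak_closure {sc z ((T ^^ n) u) | z n. True} = UNIV" using e by auto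
    show "in_class_Y TYPE('b)" by (rule Y)
    show "G (a + b) = G a + G b" for a b unfolding G_def g2_def by (simp add: sc_add lg algebra_simps)
    show "G (sc z a) = z * G a" for z a
      unfolding G_def by (simp add: gsc g2sc complex_eq_iff algebra_simps)
    show "2 * K > 0" using K by simp
    show "norm (G a) \<le> 2 * K * norm a" for a
    proof -
      have "norm (G a) \<le> \<bar>g a\<bar> + \<bar>g2 a\<bar>" unfolding G_def by (rule nb)
      also have "\<bar>g2 a\<bar> \<le> norm a * K" using K(2)[of "sc \<i> a"] unfolding g2_def by (simp add: sc_norm)
      also have "\<bar>g a\<bar> \<le> norm a * K" using K(2)[of a] by simp
      finally show ?thesis by simp
    qed
    show "bounded_linear g" by (rule blg)
    show "bounded_linear g2" by (rule bg2)
    show "norm (G a - G b) \<le> \<bar>g a - g b\<bar> + \<bar>g2 a - g2 b\<bar>" for a b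
    proof -
      have "G a - G b = complex_of_real (g a - g b) - \<i> * complex_of_real (g2 a - g2 b)"
        unfolding G_def by (simp add: algebra_simps)
      thus ?thesis using nb[of "g a - g b" "g2 a - g2 b"] by (simp only:)
    qed
    show "\<exists>h1 h2. bounded_linear h1 \<and> bounded_linear h2 \<and> (\<forall>\<eta> a. \<bar>f (sc \<eta> a)\<bar> \<le> norm \<eta> * (\<bar>h1 a\<bar> + \<bar>h2 a\<bar>))"
      if f: "bounded_linear f" for f :: "'b \<Rightarrow> real"
    proof -
      have b2: "bounded_linear (\<lambda>x. f (sc \<i> x))" by (rule bounded_linear_compose[OF f sc_bl])
      have ineq: "\<forall>\<eta> a. \<bar>f (sc \<eta> a)\<bar> \<le> norm \<eta> * (\<bar>f a\<bar> + \<bar>f (sc \<i> a)\<bar>)"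
      proof (intro allI)
        fix \<eta> a
        have "f (sc \<eta> a) = Re \<eta> * f a + Im \<eta> * f (sc \<i> a)"
          unfolding split[of \<eta> a] using f by (simp add: linear_add linear_scale bounded_linear.linear)
        hence "\<bar>f (sc \<eta> a)\<bar> \<le> \<bar>Re \<eta>\<bar> * \<bar>f a\<bar> + \<bar>Im \<eta>\<bar> * \<bar>f (sc \<i> a)\<bar>"
          by (simp add: abs_mult[symmetric] abs_triangle_ineq)
        also have "\<dots> \<le> norm \<eta> * \<bar>f a\<bar> + norm \<eta> * \<bar>f (sc \<i> a)\<bar>"
          by (intro add_mono mult_right_mono abs_Re_le_cmod abs_Im_le_cmod) auto
        finally show "\<bar>f (sc \<eta> a)\<bar> \<le> norm \<eta> * (\<bar>f a\<bar> + \<bar>f (sc \<i> a)\<bar>)" by (simp add: algebra_simps)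
      qed
      show ?thesis using f b2 ineq by (intro exI[of _ f] exI[of _ "\<lambda>x. f (sc \<i> x)"] conjI)
    qed
    show "G (C (comm T M y2)) \<noteq> 0" using ReG[of "C (comm T M y2)"] e(9) by auto
  qed
  thus False by (rule core.core_false)
qed



theorem corollary1p5:
  shows "(\<forall>(T::'a::banach \<Rightarrow> 'a) M.
            in_class_Y TYPE('a) \<and> linop scaleR T \<and> linop scaleR M \<and>
            comm T (comm T M) = (\<lambda>x. 0) \<and>
            (\<forall>u v. cyclic_vector scaleR T u \<longrightarrow>
               (\<exists>B\<in>centralizer scaleR T. \<exists>C\<in>centralizer scaleR T.
                  C \<circ> comm T M \<noteq> (\<lambda>x. 0) \<and> C v = B u))
            \<longrightarrow> \<not> weakly_supercyclic scaleR T)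
       \<and> (\<forall>(sc::complex \<Rightarrow> 'b::banach \<Rightarrow> 'b) (T::'b \<Rightarrow> 'b) M.
            normed_module sc \<and>
            in_class_Y TYPE('b) \<and> linop sc T \<and> linop sc M \<and>
            comm T (comm T M) = (\<lambda>x. 0) \<and>
            (\<forall>u v. cyclic_vector sc T u \<longrightarrow>
               (\<exists>B\<in>centralizer sc T. \<exists>C\<in>centralizer sc T.
                  C \<circ> comm T M \<noteq> (\<lambda>x. 0) \<and> C v = B u))
            \<longrightarrow> \<not> weakly_supercyclic sc T)"
  apply (intro conjI allI impI)
   apply (elim conjE)
   apply (rule real_case; assumption)
  apply (elim conjE)
  apply (rule complex_case; assumption)
  done

end
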